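(* In the two-tier residency matching game described in the context, suppose $v\ge \frac{e}{e-1}$ and high-tier doctors submit lists of length $K\ge 1$. Then, under the large market approximation, the social welfare resulting from matches of high-tier doctors with high-tier hospitals in equilibrium is not less than the corresponding social welfare when $K=1$.
   Context: Model: there are $n$ high-tier and $rn$ low-tier doctors ($r>0$), and $n$ high-tier and $rn$ low-tier hospitals, each with one position. Every hospital prefers every high doctor to every low doctor and every doctor prefers every high hospital to every low hospital; within a tier, preferences are independent uniformly random permutations. Each doctor submits a ranked list of hospitals of the allowed length: a strategy $(k,K-k)$ lists his $k$ most preferred high hospitals followed by his $K-k$ most preferred low hospitals. Hospitals submit full true rankings; doctor-proposing deferred acceptance is run. Values: a doctor gets $v>1$ if matched to a high hospital, $1$ if matched to a low one, $0$ if unmatched; a hospital gets $v$ from a high doctor, $1$ from a low doctor, $0$ if unfilled; social welfare is the sum of all agents' values. Large market approximation: $n\to\infty$ with $r,K,v$ fixed; each application is accepted independently with a probability determined by the aggregate strategy profile via fixed-point equations (expected matched doctors = expected hospitals receiving at least one admissible application; a hospital receiving on average $\lambda$ applications gets none with probability $e^{-\lambda}$). Equilibrium means the symmetric Nash equilibrium (all doctors of a tier use the same, possibly mixed, strategy, each maximizing expected value given the acceptance probabilities). *)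

theory Defs
  imports Complex_Main
begin

text \<open>A (possibly mixed) symmetric strategy of the
high-tier doctors with list length K is a probability vector x over k in {0..K}, where
x k is the probability of playing (k, K-k).  p is the acceptance probability of an
application of a high doctor to a high hospital; q is the acceptance probability of an
application of a high doctor to a low hospital (determined elsewhere by the full
fixed point; here only 0 <= q <= 1 is used).  All aggregate quantities are per n.\<close>

definition mixed_strategy :: "nat \<Rightarrow> (nat \<Rightarrow> real) \<Rightarrow> bool" where
  "mixed_strategy K x \<longleftrightarrow> (\<forall>k\<le>K. 0 \<le> x k) \<and> (\<Sum>k\<le>K. x k) = 1"

text \<open>Expected number of high-hospital applications actually sent by a doctor listing k
high hospitals (he stops once accepted), and the probability he gets a high hospital.\<close>
definition apps_sent :: "real \<Rightarrow> nat \<Rightarrow> real" where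
  "apps_sent p k = (\<Sum>j<k. (1 - p) ^ j)"

definition high_match_prob :: "real \<Rightarrow> nat \<Rightarrow> real" where
  "high_match_prob p k = 1 - (1 - p) ^ k"

text \<open>Average number of applications received by a high hospital (lambda), and the
expected fraction of high doctors matched to high hospitals.\<close>
definition high_load :: "nat \<Rightarrow> (nat \<Rightarrow> real) \<Rightarrow> real \<Rightarrow> real" where
  "high_load K x p = (\<Sum>k\<le>K. x k * apps_sent p k)"

definition high_matched :: "nat \<Rightarrow> (nat \<Rightarrow> real) \<Rightarrow> real \<Rightarrow> real" where
  "high_matched K x p = (\<Sum>k\<le>K. x k * high_match_prob p k)"

definition doctor_value :: "real \<Rightarrow> real \<Rightarrow> real \<Rightarrow> nat \<Rightarrow> nat \<Rightarrow> real" where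
  "doctor_value v p q K k = v * high_match_prob p k + (1 - p) ^ k * (1 - (1 - q) ^ (K - k))"

text \<open>Fixed-point condition: expected matched doctors = expected hospitals receiving at
least one application (1 - exp(-lambda)); with no applications at all an application
would be accepted for sure (p = 1).\<close>
definition high_fixed_point :: "nat \<Rightarrow> (nat \<Rightarrow> real) \<Rightarrow> real \<Rightarrow> bool" where
  "high_fixed_point K x p \<longleftrightarrow> 0 \<le> p \<and> p \<le> 1 \<and>
     high_matched K x p = 1 - exp (- high_load K x p) \<and>
     (high_load K x p = 0 \<longrightarrow> p = 1)"

definition high_equilibrium :: "real \<Rightarrow> real \<Rightarrow> nat \<Rightarrow> (nat \<Rightarrow> real) \<Rightarrow> real \<Rightarrow> bool" where
  "high_equilibrium v q K x p \<longleftrightarrow> mixed_strategy K x \<and> high_fixed_point K x p \<and>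
     (\<forall>k\<le>K. 0 < x k \<longrightarrow> (\<forall>k'\<le>K. doctor_value v p q K k' \<le> doctor_value v p q K k))"

text \<open>Social welfare (per n) from high-doctor/high-hospital matches: each such match gives
v to the doctor and v to the hospital.\<close>
definition hh_welfare :: "real \<Rightarrow> nat \<Rightarrow> (nat \<Rightarrow> real) \<Rightarrow> real \<Rightarrow> real" where
  "hh_welfare v K x p = 2 * v * high_matched K x p"

end

theory Submission
  imports Defs
begin

lemma strict_gt: "1 + z < exp z" if "z \<noteq> (0::real)"
  using exp_minus_greater[of "-z"] that by simp

lemma concave_strict:
  fixes l :: real assumes "0 < l" "l < 1"
  shows "l * (1 - exp (-1)) < 1 - exp (- l)"
proof -
  have a: "1 + l < exp l" using strict_gt assms by auto
  have b: "1 + (l - 1) < exp (l - 1)" using strict_gt[of "l - 1"] assms by auto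
  have e1: "exp (-l) * exp l = 1" by (simp add: exp_minus_inverse mult.commute)
  have e2: "exp (-l) * exp (l - 1) = exp (-1)" by (simp flip: exp_add)
  have p: "exp (-l) > 0" by simp
  have a': "exp (-l) * (1 + l) < 1" using mult_strict_left_mono[OF a p] e1 by simp
  have b': "exp (-l) * l < exp (-1)" using mult_strict_left_mono[OF b p] e2 by simp
  have "(1 - l) * (exp (-l) * (1 + l)) + l * (exp (-l) * l) < (1 - l) * 1 + l * exp (-1)"
    using a' b' assms
    by (intro add_strict_mono mult_strict_left_mono) auto
  then have "exp (-l) < (1 - l) + l * exp (-1)" by (simp add: algebra_simps power2_eq_square)
  then show ?thesis by (simp add: algebra_simps)
qed

lemma hmp: "high_match_prob p k = p * apps_sent p k"
  unfolding high_match_prob_def apps_sent_def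
  using one_diff_power_eq[of "1 - p" k] by simp

lemma matched_eq: "high_matched K x p = p * high_load K x p"
  unfolding high_matched_def high_load_def hmp
  by (simp add: sum_distrib_left algebra_simps)

lemma apps_ge1: "1 \<le> k \<Longrightarrow> 0 \<le> p \<Longrightarrow> p \<le> 1 \<Longrightarrow> 1 \<le> apps_sent p k"
  unfolding apps_sent_def
proof -
  assume "1 \<le> k" "0 \<le> p" "p \<le> 1"
  then have "(\<Sum>j<k. (1 - p) ^ j) = (1-p)^0 + (\<Sum>j\<in>{..<k}-{0}. (1 - p) ^ j)"
    by (subst sum.remove[of _ 0]) auto
  moreover have "0 \<le> (\<Sum>j\<in>{..<k}-{0}. (1 - p) ^ j)" using \<open>p \<le> 1\<close>
    by (intro sum_nonneg) auto
  ultimately show "1 \<le> (\<Sum>j<k. (1 - p) ^ j)" by simp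
qed

lemma apps_ge0: "p \<le> 1 \<Longrightarrow> 0 \<le> apps_sent p k"
  unfolding apps_sent_def by (intro sum_nonneg) auto

theorem lemma3:
  fixes v q q1 p p1 :: real and K :: nat and x x1 :: "nat \<Rightarrow> real"
  assumes "v \<ge> exp 1 / (exp 1 - 1)"
    and "K \<ge> 1"
    and "0 \<le> q" "q \<le> 1" "0 \<le> q1" "q1 \<le> 1"
    and "high_equilibrium v q K x p"
    and "high_equilibrium v q1 1 x1 p1"
  shows "hh_welfare v K x p \<ge> hh_welfare v 1 x1 p1"
proof -
  have e1: "exp (1::real) > 1" by simp
  have vbig: "v \<ge> exp 1 / (exp 1 - 1)" by fact
  have "exp 1 / (exp 1 - 1) > (1::real)" using e1 by (simp add: field_simps)
  then have v1: "v > 1" using vbig by linarith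
  have inv: "1 / v \<le> 1 - exp (-1)"
  proof -
    have "1 / v \<le> 1 / (exp 1 / (exp 1 - 1))"
    proof (rule divide_left_mono)
      show "exp 1 / (exp 1 - 1) \<le> v" by fact
      have "0 < exp (1::real) / (exp 1 - 1)" using e1 by (intro divide_pos_pos) auto
      then show "0 < v * (exp 1 / (exp 1 - 1))" using v1 by simp
    qed simp
    also have "\<dots> = 1 - exp (-1)" using e1 by (simp add: field_simps exp_minus)
    finally show ?thesis .
  qed
  note eq = assms(7)[unfolded high_equilibrium_def mixed_strategy_def high_fixed_point_def]
  define l where "l = high_load K x p"
  have p01: "0 \<le> p" "p \<le> 1" using eq by auto
  have fp: "p * l = 1 - exp (- l)" using eq matched_eq[of K x p] l_def by simp
  have l0p: "l = 0 \<longrightarrow> p = 1" using eq l_def by simp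
  have xnn: "\<forall>k\<le>K. 0 \<le> x k" and xs: "(\<Sum>k\<le>K. x k) = 1" using eq by auto
  have lge: "l \<ge> 1"
  proof (cases "x 0 > 0")
    case False
    then have x0: "x 0 = 0" using xnn by force
    have "1 = (\<Sum>k\<le>K. x k * 1)" using xs by simp
    also have "\<dots> \<le> (\<Sum>k\<le>K. x k * apps_sent p k)"
    proof (rule sum_mono)
      fix k assume k: "k \<in> {..K}"
      show "x k * 1 \<le> x k * apps_sent p k"
      proof (cases "k = 0")
        case True then show ?thesis using x0 by simp
      next
        case False
        then show ?thesis using apps_ge1[of k p] p01 xnn k
          by (intro mult_left_mono) auto
      qed
    qed
    finally show ?thesis unfolding l_def high_load_def .
  next
    case True
    then have "doctor_value v p q K 1 \<le> doctor_value v p q K 0"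
      using eq assms(2) by blast
    moreover have "doctor_value v p q K 0 \<le> 1"
      unfolding doctor_value_def high_match_prob_def using assms(3,4) by simp
    moreover have "v * p \<le> doctor_value v p q K 1"
    proof -
      have "(1 - q) ^ (K - 1) \<le> 1" using assms(3,4) by (intro power_le_one) auto
      then have "0 \<le> (1 - p) * (1 - (1 - q) ^ (K - 1))" using p01 by simp
      then show ?thesis unfolding doctor_value_def high_match_prob_def by simp
    qed
    ultimately have "v * p \<le> 1" by linarith
    then have pv: "p \<le> 1 / v" using v1 by (simp add: field_simps)
    show ?thesis
    proof (rule ccontr)
      assume "\<not> 1 \<le> l"
      moreover have "0 \<le> l" unfolding l_def high_load_def
        using xnn apps_ge0[of p] p01 by (intro sum_nonneg mult_nonneg_nonneg) auto
      moreover have "l \<noteq> 0" using l0p pv v1 by (auto simp: field_simps)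
      ultimately have "0 < l" "l < 1" by auto
      then have "l * (1 - exp (-1)) < p * l" using concave_strict fp by simp
      moreover have "p * l \<le> l * (1 - exp (-1))"
        using pv inv \<open>0 < l\<close> by (simp add: mult.commute mult_left_mono)
      ultimately show False by simp
    qed
  qed
  note eq1 = assms(8)[unfolded high_equilibrium_def mixed_strategy_def high_fixed_point_def]
  have x1nn: "0 \<le> x1 0" and x1s: "x1 0 + x1 1 = 1" using eq1 by auto
  have load1: "high_load 1 x1 p1 = x1 1"
    unfolding high_load_def apps_sent_def by simp
  have M1: "high_matched 1 x1 p1 = 1 - exp (- x1 1)" using eq1 load1 by simp
  have "1 - exp (- x1 1) \<le> 1 - exp (- l)"
    using lge x1nn x1s by simp
  then have "high_matched 1 x1 p1 \<le> high_matched K x p"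
    using M1 fp matched_eq[of K x p] l_def by simp
  then show ?thesis unfolding hh_welfare_def using v1 by simp
qed

end
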